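(* Let $\Delta$ be a noncommutative discrete valuation ring with uniformiser $\pi$ and finite residue field $k=\Delta/(\pi)$. Let $n,r\ge1$ and let $1\le c_1\le c_2\le\cdots\le c_r\le n$ be integers. For $i\in\{1,\ldots,n\}$ let $M_i\subseteq\Delta^{r}$ (row vectors) be the left $\Delta$-submodule of vectors whose $s$-th entry lies in $\Delta$ if $i\le c_s$ and in $\pi\Delta$ if $i>c_s$; thus $M_1=\Delta^r\supseteq M_2\supseteq\cdots\supseteq M_n\supseteq\pi M_1$. For a finite colength left $\Delta$-submodule $X\subseteq M_1$ let $M_j(X)=(X\cap M_j)/\pi X$ for $j=1,\ldots,n$ and $M_{n+1}(X)=0$, giving a filtered $k$-vector space $M_*X: M_1(X)\supseteq\cdots\supseteq M_n(X)\supseteq M_{n+1}(X)=0$. Let $X_1\subseteq M_1$ be a finite colength submodule and $Y_1=X_1+\pi M_1$. Then $M_*X_1\cong M_*Y_1$ as filtered vector spaces.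
   Context: A noncommutative discrete valuation ring is a domain $\Delta$ with a normal regular element $\pi$ (uniformiser) such that $\pi\Delta=\Delta\pi$ is the Jacobson radical and $\Delta/(\pi)$ is a division ring, here assumed finite (hence a finite field $k$). Since $\pi\Delta=\Delta\pi$, each $M_j(X)$ is a $k$-vector space. An isomorphism of filtered vector spaces $V_*\to V'_*$ is a $k$-linear isomorphism $V_1\to V'_1$ mapping each $V_j$ onto $V'_j$. *)

theory Defs
  imports Main
begin

definition left_ideal :: "'a::ring_1 set \<Rightarrow> bool" where
  "left_ideal I \<longleftrightarrow> 0 \<in> I \<and> (\<forall>x\<in>I. \<forall>y\<in>I. x + y \<in> I) \<and> (\<forall>x\<in>I. - x \<in> I)
     \<and> (\<forall>a. \<forall>x\<in>I. a * x \<in> I)"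

definition maximal_left_ideal :: "'a::ring_1 set \<Rightarrow> bool" where
  "maximal_left_ideal I \<longleftrightarrow> left_ideal I \<and> I \<noteq> UNIV \<and>
     (\<forall>J. left_ideal J \<and> I \<subseteq> J \<longrightarrow> J = I \<or> J = UNIV)"

definition jacobson_radical :: "'a::ring_1 set" where
  "jacobson_radical = \<Inter> {I. maximal_left_ideal I}"

definition pideal :: "'a::ring_1 \<Rightarrow> 'a set" where
  "pideal p = range (\<lambda>x. p * x)"

definition quotient_division_ring :: "'a::ring_1 \<Rightarrow> bool" where
  "quotient_division_ring p \<longleftrightarrow> 1 \<notin> pideal p \<and>
     (\<forall>x. x \<notin> pideal p \<longrightarrow> (\<exists>y. x * y - 1 \<in> pideal p \<and> y * x - 1 \<in> pideal p))"

definition residue_classes :: "'a::ring_1 \<Rightarrow> 'a set set" where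
  "residue_classes p = (\<lambda>x. (\<lambda>i. x + i) ` pideal p) ` UNIV"

text \<open>The type is the domain \<open>\<Delta>\<close>; \<open>p\<close> is the uniformiser \<open>\<pi>\<close>.\<close>
definition nc_dvr :: "'a::ring_1_no_zero_divisors \<Rightarrow> bool" where
  "nc_dvr p \<longleftrightarrow> p \<noteq> 0
     \<and> range (\<lambda>x. p * x) = range (\<lambda>x. x * p)
     \<and> jacobson_radical = pideal p
     \<and> quotient_division_ring p"

definition vecs :: "nat \<Rightarrow> (nat \<Rightarrow> 'a::ring_1) set" where
  "vecs r = {v. \<forall>s\<ge>r. v s = 0}"

definition vadd :: "(nat \<Rightarrow> 'a::ring_1) \<Rightarrow> (nat \<Rightarrow> 'a) \<Rightarrow> nat \<Rightarrow> 'a" where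
  "vadd v w = (\<lambda>s. v s + w s)"

definition vsmult :: "'a::ring_1 \<Rightarrow> (nat \<Rightarrow> 'a) \<Rightarrow> nat \<Rightarrow> 'a" where
  "vsmult a v = (\<lambda>s. a * v s)"

definition left_submodule :: "nat \<Rightarrow> (nat \<Rightarrow> 'a::ring_1) set \<Rightarrow> bool" where
  "left_submodule r X \<longleftrightarrow> X \<subseteq> vecs r \<and> (\<lambda>_. 0) \<in> X
     \<and> (\<forall>x\<in>X. \<forall>y\<in>X. vadd x y \<in> X) \<and> (\<forall>a. \<forall>x\<in>X. vsmult a x \<in> X)"

definition vcoset :: "(nat \<Rightarrow> 'a::ring_1) set \<Rightarrow> (nat \<Rightarrow> 'a) \<Rightarrow> (nat \<Rightarrow> 'a) set" where
  "vcoset P v = (\<lambda>x. vadd v x) ` P"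

definition finite_colength :: "nat \<Rightarrow> (nat \<Rightarrow> 'a::ring_1) set \<Rightarrow> bool" where
  "finite_colength r X \<longleftrightarrow> finite (vcoset X ` vecs r)"

definition pimod :: "'a::ring_1 \<Rightarrow> (nat \<Rightarrow> 'a) set \<Rightarrow> (nat \<Rightarrow> 'a) set" where
  "pimod p X = vsmult p ` X"

definition Mlat :: "'a::ring_1 \<Rightarrow> nat \<Rightarrow> (nat \<Rightarrow> nat) \<Rightarrow> nat \<Rightarrow> (nat \<Rightarrow> 'a) set" where
  "Mlat p r c i = {v \<in> vecs r. \<forall>s<r. c s < i \<longrightarrow> v s \<in> pideal p}"

definition Mquot :: "'a::ring_1 \<Rightarrow> nat \<Rightarrow> (nat \<Rightarrow> nat) \<Rightarrow> (nat \<Rightarrow> 'a) set \<Rightarrow> nat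
    \<Rightarrow> (nat \<Rightarrow> 'a) set set" where
  "Mquot p r c X j = vcoset (pimod p X) ` (X \<inter> Mlat p r c j)"

text \<open>Isomorphism of the filtered \<open>k\<close>-vector spaces \<open>M_*X \<cong> M_*Y\<close>: a bijection
  \<open>F : M_1(X) \<rightarrow> M_1(Y)\<close> which is additive and compatible with scalars (the
  action of \<open>\<Delta>\<close> on \<open>X/\<pi>X\<close> factors through \<open>k = \<Delta>/(\<pi>)\<close>, so this is
  \<open>k\<close>-linearity), and maps each \<open>M_j(X)\<close> onto \<open>M_j(Y)\<close>, \<open>1 \<le> j \<le> n\<close>
  (the term \<open>M_{n+1} = 0\<close> is automatic).\<close>
definition filtered_iso :: "'a::ring_1 \<Rightarrow> nat \<Rightarrow> (nat \<Rightarrow> nat) \<Rightarrow> nat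
    \<Rightarrow> (nat \<Rightarrow> 'a) set \<Rightarrow> (nat \<Rightarrow> 'a) set \<Rightarrow> bool" where
  "filtered_iso p r c n X Y \<longleftrightarrow>
    (\<exists>F. bij_betw F (Mquot p r c X 1) (Mquot p r c Y 1)
      \<and> (\<forall>x1\<in>X. \<forall>x2\<in>X. \<forall>y1\<in>Y. \<forall>y2\<in>Y.
            F (vcoset (pimod p X) x1) = vcoset (pimod p Y) y1 \<longrightarrow>
            F (vcoset (pimod p X) x2) = vcoset (pimod p Y) y2 \<longrightarrow>
            F (vcoset (pimod p X) (vadd x1 x2)) = vcoset (pimod p Y) (vadd y1 y2))
      \<and> (\<forall>a. \<forall>x\<in>X. \<forall>y\<in>Y.
            F (vcoset (pimod p X) x) = vcoset (pimod p Y) y \<longrightarrow>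
            F (vcoset (pimod p X) (vsmult a x)) = vcoset (pimod p Y) (vsmult a y))
      \<and> (\<forall>j\<in>{1..n}. F ` Mquot p r c X j = Mquot p r c Y j))"

end

theory Submission
  imports Defs "HOL-Library.Function_Algebras"
begin

definition cs :: "'v::ab_group_add set \<Rightarrow> 'v \<Rightarrow> 'v set" where
  "cs A v = (\<lambda>x. v + x) ` A"

definition sg :: "'v::ab_group_add set \<Rightarrow> bool" where
  "sg A \<longleftrightarrow> 0 \<in> A \<and> (\<forall>x\<in>A. \<forall>y\<in>A. x + y \<in> A) \<and> (\<forall>x\<in>A. - x \<in> A)"

lemma sg_diff: "sg A \<Longrightarrow> x \<in> A \<Longrightarrow> y \<in> A \<Longrightarrow> x - y \<in> A"
  unfolding sg_def by (metis diff_conv_add_uminus)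

lemma cs_eq: assumes "sg A" shows "cs A u = cs A v \<longleftrightarrow> u - v \<in> A"
proof
  assume "cs A u = cs A v"
  then have "u + 0 \<in> cs A v" using assms unfolding sg_def cs_def by blast
  then obtain a where "a \<in> A" "u = v + a" unfolding cs_def by auto
  then show "u - v \<in> A" by simp
next
  assume h: "u - v \<in> A"
  show "cs A u = cs A v"
  proof (rule set_eqI)
    fix z
    have "z \<in> cs A u \<Longrightarrow> z \<in> cs A v"
    proof -
      assume "z \<in> cs A u"
      then obtain a where a: "a \<in> A" "z = u + a" unfolding cs_def by auto
      have "(u - v) + a \<in> A" using assms h a unfolding sg_def by blast
      moreover have "z = v + ((u - v) + a)" using a by simp
      ultimately show ?thesis unfolding cs_def by blast
    qed
    moreover have "z \<in> cs A v \<Longrightarrow> z \<in> cs A u"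
    proof -
      assume "z \<in> cs A v"
      then obtain a where a: "a \<in> A" "z = v + a" unfolding cs_def by auto
      have "- (u - v) + a \<in> A" using assms h a unfolding sg_def by blast
      moreover have "z = u + (- (u - v) + a)" using a by simp
      ultimately show ?thesis unfolding cs_def by blast
    qed
    ultimately show "z \<in> cs A u \<longleftrightarrow> z \<in> cs A v" by blast
  qed
qed

lemma bij_ker:
  assumes "\<forall>a\<in>D. \<forall>b\<in>D. f a = f b \<longleftrightarrow> g a = g b"
  shows "bij_betw (\<lambda>y. g (SOME a. a \<in> D \<and> f a = y)) (f ` D) (g ` D)"
proof -
  let ?h = "\<lambda>y. g (SOME a. a \<in> D \<and> f a = y)"
  have h: "?h (f a) = g a" if "a \<in> D" for a
  proof -
    have "\<exists>b. b \<in> D \<and> f b = f a" using that by blast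
    then have "(SOME b. b \<in> D \<and> f b = f a) \<in> D \<and> f (SOME b. b \<in> D \<and> f b = f a) = f a"
      by (rule someI_ex)
    then show ?thesis using assms that by blast
  qed
  show ?thesis
    unfolding bij_betw_def
  proof
    show "inj_on ?h (f ` D)"
    proof (rule inj_onI)
      fix y1 y2 assume "y1 \<in> f ` D" "y2 \<in> f ` D" "?h y1 = ?h y2"
      then obtain a1 a2 where "a1 \<in> D" "a2 \<in> D" "y1 = f a1" "y2 = f a2" "?h y1 = ?h y2" by blast
      then show "y1 = y2" using h assms by metis
    qed
    show "?h ` f ` D = g ` D"
    proof
      show "?h ` f ` D \<subseteq> g ` D" using h by auto
      show "g ` D \<subseteq> ?h ` f ` D"
      proof
        fix z assume "z \<in> g ` D"
        then obtain a where "a \<in> D" "z = g a" by blast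
        then have "z = ?h (f a)" using h[of a] by simp
        moreover have "f a \<in> f ` D" using \<open>a \<in> D\<close> by (rule imageI)
        ultimately show "z \<in> ?h ` f ` D" by (rule image_eqI)
      qed
    qed
  qed
qed

lemma card_ker:
  assumes "\<forall>a\<in>D. \<forall>b\<in>D. f a = f b \<longleftrightarrow> g a = g b"
  shows "card (f ` D) = card (g ` D)" and "finite (f ` D) \<longleftrightarrow> finite (g ` D)"
  using bij_ker[OF assms] bij_betw_same_card bij_betw_finite by blast+

lemma lagrange:
  assumes A: "sg A" and B: "sg B" and C: "sg C" and AB: "A \<subseteq> B" and BC: "B \<subseteq> C"
    and fin: "finite (cs A ` C)"
  shows "finite (cs B ` C)" "finite (cs A ` B)"
    "card (cs A ` C) = card (cs B ` C) * card (cs A ` B)"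
proof -
  define fib where "fib c = {\<alpha>. \<exists>x\<in>C. \<alpha> = cs A x \<and> cs B x = cs B c}" for c
  have fib_eq: "fib c = fib c' \<longleftrightarrow> cs B c = cs B c'" if "c \<in> C" "c' \<in> C" for c c'
  proof
    assume e: "fib c = fib c'"
    have "cs A c \<in> fib c" using that unfolding fib_def by blast
    then have "cs A c \<in> fib c'" using e by simp
    then obtain x where x: "x \<in> C" "cs A c = cs A x" "cs B x = cs B c'"
      unfolding fib_def by blast
    then have "c - x \<in> A" using cs_eq[OF A, of c x] by simp
    then have "c - x \<in> B" using AB by blast
    then have "cs B c = cs B x" using cs_eq[OF B, of c x] by simp
    then show "cs B c = cs B c'" using x by simp
  next
    assume "cs B c = cs B c'"
    then show "fib c = fib c'" unfolding fib_def by simp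
  qed
  have fib_img: "fib c = (\<lambda>b. cs A (c + b)) ` B" if "c \<in> C" for c
  proof (rule set_eqI)
    fix \<alpha>
    show "\<alpha> \<in> fib c \<longleftrightarrow> \<alpha> \<in> (\<lambda>b. cs A (c + b)) ` B"
    proof
      assume "\<alpha> \<in> fib c"
      then obtain x where x: "x \<in> C" "\<alpha> = cs A x" "cs B x = cs B c" unfolding fib_def by blast
      then have "x - c \<in> B" using cs_eq[OF B, of x c] by simp
      moreover have "x = c + (x - c)" by simp
      ultimately show "\<alpha> \<in> (\<lambda>b. cs A (c + b)) ` B" using x by (metis image_eqI)
    next
      assume "\<alpha> \<in> (\<lambda>b. cs A (c + b)) ` B"
      then obtain b where b: "b \<in> B" "\<alpha> = cs A (c + b)" by blast
      have "c + b \<in> C" using C that b BC unfolding sg_def by blast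
      moreover have "cs B (c + b) = cs B c" using cs_eq[OF B] b by simp
      ultimately show "\<alpha> \<in> fib c" using b unfolding fib_def by blast
    qed
  qed
  have fib_card: "card (fib c) = card (cs A ` B)" if "c \<in> C" for c
  proof -
    have "\<forall>a\<in>B. \<forall>b\<in>B. cs A (c + a) = cs A (c + b) \<longleftrightarrow> cs A a = cs A b"
      using cs_eq[OF A] by simp
    from card_ker(1)[OF this] show ?thesis using fib_img[OF that] by simp
  qed
  have U: "\<Union> (fib ` C) = cs A ` C"
  proof
    show "\<Union> (fib ` C) \<subseteq> cs A ` C" unfolding fib_def by blast
    show "cs A ` C \<subseteq> \<Union> (fib ` C)"
    proof
      fix \<alpha> assume "\<alpha> \<in> cs A ` C"
      then obtain x where x: "x \<in> C" "\<alpha> = cs A x" by blast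
      then have "\<alpha> \<in> fib x" unfolding fib_def by blast
      then show "\<alpha> \<in> \<Union> (fib ` C)" using x by blast
    qed
  qed
  have finF: "finite (fib ` C)" using fin U finite_UnionD by metis
  have disj: "\<forall>c1\<in>fib ` C. \<forall>c2\<in>fib ` C. c1 \<noteq> c2 \<longrightarrow> c1 \<inter> c2 = {}"
  proof (intro ballI impI)
    fix c1 c2 assume "c1 \<in> fib ` C" "c2 \<in> fib ` C" "c1 \<noteq> c2"
    then obtain x1 x2 where x: "x1 \<in> C" "x2 \<in> C" "c1 = fib x1" "c2 = fib x2" by blast
    show "c1 \<inter> c2 = {}"
    proof (rule ccontr)
      assume "c1 \<inter> c2 \<noteq> {}"
      then obtain \<alpha> where "\<alpha> \<in> fib x1" "\<alpha> \<in> fib x2" using x by blast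
      then obtain y1 y2 where y: "y1 \<in> C" "y2 \<in> C" "\<alpha> = cs A y1" "\<alpha> = cs A y2"
        "cs B y1 = cs B x1" "cs B y2 = cs B x2" unfolding fib_def by blast
      then have "y1 - y2 \<in> A" using cs_eq[OF A, of y1 y2] by simp
      then have "y1 - y2 \<in> B" using AB by blast
      then have "cs B y1 = cs B y2" using cs_eq[OF B, of y1 y2] by simp
      then have "cs B x1 = cs B x2" using y by simp
      then have "fib x1 = fib x2" using fib_eq[of x1 x2] x by simp
      then show False using x \<open>c1 \<noteq> c2\<close> by simp
    qed
  qed
  have fe: "\<forall>a\<in>C. \<forall>b\<in>C. fib a = fib b \<longleftrightarrow> cs B a = cs B b"
    using fib_eq by simp
  have cardF: "card (fib ` C) = card (cs B ` C)"
    by (rule card_ker(1)[OF fe])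
  have finF2: "finite (fib ` C) = finite (cs B ` C)"
    by (rule card_ker(2)[OF fe])
  show "finite (cs B ` C)" using finF finF2 by simp
  have "0 \<in> C" using C unfolding sg_def by blast
  have "fib 0 \<subseteq> cs A ` C" using U \<open>0 \<in> C\<close> by blast
  then have "finite (fib 0)" using fin finite_subset by blast
  then show "finite (cs A ` B)" using fib_img[OF \<open>0 \<in> C\<close>] by simp
  have "card (cs A ` B) * card (fib ` C) = card (\<Union> (fib ` C))"
    apply (rule card_partition[OF finF])
    using U fin apply simp
    using fib_card apply blast
    using disj by blast
  then show "card (cs A ` C) = card (cs B ` C) * card (cs A ` B)"
    using U cardF by (simp add: mult.commute)
qed


definition smod :: "(nat \<Rightarrow> 'a::ring_1) set \<Rightarrow> bool" where
  "smod A \<longleftrightarrow> 0 \<in> A \<and> (\<forall>x\<in>A. \<forall>y\<in>A. x + y \<in> A) \<and> (\<forall>a. \<forall>x\<in>A. vsmult a x \<in> A)"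

definition lc :: "nat \<Rightarrow> (nat \<Rightarrow> 'a::ring_1) \<Rightarrow> (nat \<Rightarrow> nat \<Rightarrow> 'a) \<Rightarrow> nat \<Rightarrow> 'a" where
  "lc d a bs = (\<Sum>i<d. vsmult (a i) (bs i))"

lemma vs_add: "vsmult a (x + y) = vsmult a x + vsmult a y"
  by (simp add: vsmult_def fun_eq_iff distrib_left)
lemma vs_add2: "vsmult (a + b) x = vsmult a x + vsmult b x"
  by (simp add: vsmult_def fun_eq_iff distrib_right)
lemma vs_diff: "vsmult a (x - y) = vsmult a x - vsmult a y"
  by (simp add: vsmult_def fun_eq_iff right_diff_distrib)
lemma vs_diff2: "vsmult (a - b) x = vsmult a x - vsmult b x"
  by (simp add: vsmult_def fun_eq_iff left_diff_distrib)
lemma vs_assoc: "vsmult a (vsmult b x) = vsmult (a * b) x"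
  by (simp add: vsmult_def fun_eq_iff mult.assoc)
lemma vs_zero[simp]: "vsmult a 0 = 0"
  by (simp add: vsmult_def fun_eq_iff)
lemma vs_zero2[simp]: "vsmult 0 x = 0"
  by (simp add: vsmult_def fun_eq_iff)
lemma vs_one[simp]: "vsmult 1 x = x"
  by (simp add: vsmult_def fun_eq_iff)
lemma vs_neg: "vsmult (-1) x = - x"
  by (simp add: vsmult_def fun_eq_iff)
lemma vadd_eq: "vadd = (+)"
  by (simp add: vadd_def fun_eq_iff)
lemma vcoset_eq: "vcoset P v = cs P v"
  by (simp add: vcoset_def cs_def vadd_eq)

lemma smod_sg: assumes "smod A" shows "sg A"
  unfolding sg_def
proof (intro conjI ballI)
  show "0 \<in> A" using assms smod_def by blast
  show "x + y \<in> A" if "x \<in> A" "y \<in> A" for x y using assms that smod_def by blast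
  show "- x \<in> A" if "x \<in> A" for x
    using assms that unfolding smod_def by (metis vs_neg)
qed

lemma smod_0: "smod A \<Longrightarrow> 0 \<in> A" unfolding smod_def by blast
lemma smod_add: "smod A \<Longrightarrow> x \<in> A \<Longrightarrow> y \<in> A \<Longrightarrow> x + y \<in> A" unfolding smod_def by blast
lemma smod_smult: "smod A \<Longrightarrow> x \<in> A \<Longrightarrow> vsmult a x \<in> A" unfolding smod_def by blast
lemma smod_diff: "smod A \<Longrightarrow> x \<in> A \<Longrightarrow> y \<in> A \<Longrightarrow> x - y \<in> A"
  using smod_sg sg_diff by blast
lemma smod_Int: "smod A \<Longrightarrow> smod B \<Longrightarrow> smod (A \<inter> B)"
  unfolding smod_def by blast

lemma smod_sum: assumes "smod A"
  shows "finite I \<Longrightarrow> (\<forall>i\<in>I. f i \<in> A) \<Longrightarrow> sum f I \<in> A"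
  by (induction I rule: finite_induct) (auto intro: smod_0[OF assms] smod_add[OF assms])

lemma lc_mem: "smod A \<Longrightarrow> \<forall>i<d. bs i \<in> A \<Longrightarrow> lc d a bs \<in> A"
  unfolding lc_def by (rule smod_sum) (auto intro: smod_smult)

lemma lc_diff: "lc d a bs - lc d b bs = lc d (\<lambda>i. a i - b i) bs"
  unfolding lc_def by (simp add: sum_subtractf vs_diff2)
lemma lc_add: "lc d a bs + lc d b bs = lc d (\<lambda>i. a i + b i) bs"
  unfolding lc_def by (simp add: sum.distrib vs_add2)
lemma lc_diffb: "lc d a bs - lc d a bs' = lc d a (\<lambda>i. bs i - bs' i)"
  unfolding lc_def by (simp add: sum_subtractf vs_diff)
lemma lc_cong: "\<forall>i<d. a i = b i \<Longrightarrow> \<forall>i<d. bs i = bs' i \<Longrightarrow> lc d a bs = lc d b bs'"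
  unfolding lc_def by (rule sum.cong) auto
lemma lc_Suc: "lc (Suc d) a bs = lc d a bs + vsmult (a d) (bs d)"
  unfolding lc_def by simp
lemma lc_0[simp]: "lc 0 a bs = 0"
  unfolding lc_def by simp
lemma lc_smult: "vsmult c (lc d a bs) = lc d (\<lambda>i. c * a i) bs"
proof (induction d)
  case 0
  then show ?case by (simp only: lc_0 vs_zero)
next
  case (Suc d)
  have "vsmult c (lc (Suc d) a bs) = vsmult c (lc d a bs) + vsmult c (vsmult (a d) (bs d))"
    by (simp only: lc_Suc vs_add)
  also have "\<dots> = lc d (\<lambda>i. c * a i) bs + vsmult (c * a d) (bs d)"
    by (simp only: Suc vs_assoc)
  also have "\<dots> = lc (Suc d) (\<lambda>i. c * a i) bs" by (simp only: lc_Suc)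
  finally show ?case .
qed

locale dvr =
  fixes p :: "'a::ring_1_no_zero_divisors"
  assumes p0: "p \<noteq> 0"
    and normal: "\<And>a. \<exists>a'. a * p = p * a'"
    and one_notin: "1 \<notin> pideal p"
    and inv: "\<And>x. x \<notin> pideal p \<Longrightarrow> \<exists>y. y * x - 1 \<in> pideal p"
    and finres: "finite (residue_classes p)"
begin

lemma pid_iff: "x \<in> pideal p \<longleftrightarrow> (\<exists>u. x = p * u)"
  unfolding pideal_def by auto

lemma pid_mult: "x \<in> pideal p \<Longrightarrow> a * x \<in> pideal p"
proof -
  assume "x \<in> pideal p"
  then obtain u where u: "x = p * u" using pid_iff by blast
  obtain a' where "a * p = p * a'" using normal by blast
  then have "a * x = p * (a' * u)" using u by (simp add: mult.assoc[symmetric])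
  then show ?thesis using pid_iff by blast
qed

lemma sg_pid: "sg (pideal p)"
  unfolding sg_def
proof (intro conjI ballI)
  show "0 \<in> pideal p" unfolding pid_iff by (rule exI[of _ 0]) simp
  show "x + y \<in> pideal p" if xy: "x \<in> pideal p" "y \<in> pideal p" for x y
  proof -
    obtain u v where "x = p * u" "y = p * v" using xy pid_iff by blast
    then have "x + y = p * (u + v)" by (simp add: distrib_left)
    then show ?thesis unfolding pid_iff by blast
  qed
  show "- x \<in> pideal p" if xy: "x \<in> pideal p" for x
  proof -
    obtain u where "x = p * u" using xy pid_iff by blast
    then have "- x = p * (- u)" by simp
    then show ?thesis unfolding pid_iff by blast
  qed
qed

lemma pimod_iff: "y \<in> pimod p X \<longleftrightarrow> (\<exists>x\<in>X. y = vsmult p x)"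
  unfolding pimod_def by auto
lemma pimodI: "x \<in> X \<Longrightarrow> vsmult p x \<in> pimod p X"
  unfolding pimod_def by (rule imageI)
lemma pimodI2: "x \<in> X \<Longrightarrow> y = vsmult p x \<Longrightarrow> y \<in> pimod p X"
  unfolding pimod_def by simp
lemma pimodE: "y \<in> pimod p X \<Longrightarrow> \<exists>x. x \<in> X \<and> y = vsmult p x"
  unfolding pimod_def by auto

lemma vs_p_comm: "\<exists>a'. vsmult a (vsmult p x) = vsmult p (vsmult a' x)"
proof -
  obtain a' where "a * p = p * a'" using normal by blast
  then have "vsmult a (vsmult p x) = vsmult p (vsmult a' x)" by (simp add: vs_assoc)
  then show ?thesis by blast
qed

lemma pimod_smod: assumes X: "smod X" shows "smod (pimod p X)"
  unfolding smod_def
proof (intro conjI ballI allI)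
  have "(0::nat\<Rightarrow>'a) = vsmult p 0" by simp
  then show "0 \<in> pimod p X" by (rule pimodI2[OF smod_0[OF X]])
  show "x + y \<in> pimod p X" if xy: "x \<in> pimod p X" "y \<in> pimod p X" for x y
  proof -
    obtain u v where uv: "u \<in> X" "x = vsmult p u" "v \<in> X" "y = vsmult p v"
      using pimodE[OF xy(1)] pimodE[OF xy(2)] by blast
    then have "x + y = vsmult p (u + v)" by (simp add: vs_add)
    moreover have "u + v \<in> X" using uv smod_add[OF X] by blast
    ultimately show ?thesis by (intro pimodI2[of "u + v"]) auto
  qed
  show "vsmult a x \<in> pimod p X" if xx: "x \<in> pimod p X" for a x
  proof -
    obtain u where u: "u \<in> X" "x = vsmult p u" using pimodE[OF xx] by blast
    obtain a' where "vsmult a (vsmult p u) = vsmult p (vsmult a' u)" using vs_p_comm by blast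
    moreover have "vsmult a' u \<in> X" using u smod_smult[OF X] by blast
    ultimately show ?thesis using u by (intro pimodI2[of "vsmult a' u"]) auto
  qed
qed

lemma pimod_sub: "smod X \<Longrightarrow> pimod p X \<subseteq> X"
  unfolding pimod_def using smod_smult by blast

lemma pimod_mono: "X \<subseteq> Y \<Longrightarrow> pimod p X \<subseteq> pimod p Y"
  unfolding pimod_def by blast

lemma lc_pid:
  assumes T: "smod T" and bs: "\<forall>i<d. bs i \<in> T" and a: "\<forall>i<d. a i \<in> pideal p"
  shows "lc d a bs \<in> pimod p T"
proof -
  define u where "u i = (SOME u. a i = p * u)" for i
  have "a i = p * u i" if id: "i < d" for i
  proof -
    have "\<exists>v. a i = p * v" using a id pid_iff by blast
    then show "a i = p * u i" unfolding u_def by (rule someI_ex)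
  qed
  then have "lc d a bs = lc d (\<lambda>i. p * u i) bs" by (intro lc_cong) auto
  also have "\<dots> = vsmult p (lc d u bs)" by (simp add: lc_smult)
  finally show ?thesis using pimodI2[OF lc_mem[OF T bs]] by blast
qed

lemma key_inv:
  assumes T: "smod T" and S: "smod S" and PT: "pimod p T \<subseteq> S" and t: "t \<in> T" and nt: "t \<notin> S"
    and at: "vsmult a t \<in> S"
  shows "a \<in> pideal p"
proof (rule ccontr)
  assume "a \<notin> pideal p"
  then obtain y where "y * a - 1 \<in> pideal p" using inv by blast
  then obtain u where u: "y * a - 1 = p * u" using pid_iff by blast
  have "vsmult (y * a) t = vsmult y (vsmult a t)" by (simp add: vs_assoc)
  then have 1: "vsmult (y * a) t \<in> S" using smod_smult[OF S at] by simp
  have "vsmult (y * a - 1) t = vsmult p (vsmult u t)" using u by (simp add: vs_assoc)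
  moreover have "vsmult p (vsmult u t) \<in> pimod p T" using smod_smult[OF T t] by (rule pimodI)
  ultimately have 2: "vsmult (y * a - 1) t \<in> S" using PT by auto
  have "t = vsmult (y * a) t - vsmult (y * a - 1) t" by (simp add: vs_diff2)
  then have "t \<in> S" using smod_diff[OF S 1 2] by simp
  then show False using nt by blast
qed

definition q where "q = card (residue_classes p)"

lemma res_cs: "residue_classes p = (\<lambda>x. cs (pideal p) x) ` UNIV"
  unfolding residue_classes_def cs_def by simp

lemma vs_uminus: "vsmult (- a) x = - vsmult a x"
  by (simp add: vsmult_def fun_eq_iff)

lemma q_ge2: "q \<ge> 2"
proof -
  have ne: "cs (pideal p) 0 \<noteq> cs (pideal p) 1"
  proof
    assume "cs (pideal p) 0 = cs (pideal p) 1"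
    then have "0 - 1 \<in> pideal p" using cs_eq[OF sg_pid] by blast
    then have "- (0 - 1) \<in> pideal p" using sg_pid unfolding sg_def by blast
    then show False using one_notin by simp
  qed
  have "{cs (pideal p) 0, cs (pideal p) 1} \<subseteq> residue_classes p" using res_cs by auto
  then have "card {cs (pideal p) 0, cs (pideal p) 1} \<le> q" unfolding q_def using finres card_mono by blast
  then show ?thesis using ne by simp
qed

definition kspace where
  "kspace T S \<longleftrightarrow> smod T \<and> smod S \<and> S \<subseteq> T \<and> pimod p T \<subseteq> S"

definition basis where
  "basis T S d bs \<longleftrightarrow> (\<forall>i<d. bs i \<in> T) \<and> (\<forall>t\<in>T. \<exists>a. t - lc d a bs \<in> S)
     \<and> (\<forall>a. lc d a bs \<in> S \<longrightarrow> (\<forall>i<d. a i \<in> pideal p))"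

lemma pmult_in:
  assumes T: "smod T" and PT: "pimod p T \<subseteq> S" and t: "t \<in> T" and a: "a \<in> pideal p"
  shows "vsmult a t \<in> S"
proof -
  obtain u where "a = p * u" using a pid_iff by blast
  then have "vsmult a t = vsmult p (vsmult u t)" by (simp add: vs_assoc)
  moreover have "vsmult p (vsmult u t) \<in> pimod p T" using T t smod_smult pimodI by blast
  ultimately show ?thesis using PT by auto
qed

lemma card_line:
  assumes ks: "kspace T S" and t: "t \<in> T" and nt: "t \<notin> S"
  defines "S' \<equiv> {s + vsmult a t | s a. s \<in> S}"
  shows "card (cs S ` S') = q" and "kspace T S'" and "S \<subseteq> S'" and "smod S'"
proof -
  from ks have T: "smod T" and S: "smod S" and ST: "S \<subseteq> T" and PT: "pimod p T \<subseteq> S"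
    unfolding kspace_def by auto
  have mem: "x \<in> S' \<longleftrightarrow> (\<exists>s a. s \<in> S \<and> x = s + vsmult a t)" for x
    unfolding S'_def by blast
  have memI: "s \<in> S \<Longrightarrow> x = s + vsmult a t \<Longrightarrow> x \<in> S'" for x s a
    unfolding S'_def by blast
  have memE: "x \<in> S' \<Longrightarrow> \<exists>s a. s \<in> S \<and> x = s + vsmult a t" for x
    unfolding S'_def by blast
  have img: "cs S ` S' = (\<lambda>a. cs S (vsmult a t)) ` UNIV"
  proof
    show "cs S ` S' \<subseteq> (\<lambda>a. cs S (vsmult a t)) ` UNIV"
    proof
      fix C assume "C \<in> cs S ` S'"
      then obtain x where x: "x \<in> S'" "C = cs S x" by blast
      from mem[THEN iffD1, OF x(1)] obtain s a where sa0: "s \<in> S" "x = s + vsmult a t" by blast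
      have sa: "s \<in> S" "C = cs S (s + vsmult a t)" using sa0 x by auto
      have "cs S (s + vsmult a t) = cs S (vsmult a t)" using cs_eq[OF smod_sg[OF S]] sa by simp
      then show "C \<in> (\<lambda>a. cs S (vsmult a t)) ` UNIV" using sa by auto
    qed
    show "(\<lambda>a. cs S (vsmult a t)) ` UNIV \<subseteq> cs S ` S'"
    proof
      fix C assume "C \<in> (\<lambda>a. cs S (vsmult a t)) ` UNIV"
      then obtain a where C: "C = cs S (vsmult a t)" by blast
      have "vsmult a t = 0 + vsmult a t" by simp
      then have "vsmult a t \<in> S'" by (rule memI[OF smod_0[OF S]])
      then show "C \<in> cs S ` S'" using C by blast
    qed
  qed
  have ker: "\<forall>a\<in>UNIV. \<forall>b\<in>UNIV. cs S (vsmult a t) = cs S (vsmult b t) \<longleftrightarrow> cs (pideal p) a = cs (pideal p) b"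
  proof (intro ballI)
    fix a b :: 'a
    have "cs S (vsmult a t) = cs S (vsmult b t) \<longleftrightarrow> vsmult (a - b) t \<in> S"
      using cs_eq[OF smod_sg[OF S]] by (simp add: vs_diff2)
    also have "\<dots> \<longleftrightarrow> a - b \<in> pideal p"
      using key_inv[OF T S PT t nt] pmult_in[OF T PT t] by blast
    also have "\<dots> \<longleftrightarrow> cs (pideal p) a = cs (pideal p) b" using cs_eq[OF sg_pid] by simp
    finally show "cs S (vsmult a t) = cs S (vsmult b t) \<longleftrightarrow> cs (pideal p) a = cs (pideal p) b" .
  qed
  show "card (cs S ` S') = q" unfolding img q_def res_cs by (rule card_ker(1)[OF ker])
  show sm: "smod S'" unfolding smod_def
  proof (intro conjI ballI allI)
    have "(0::nat\<Rightarrow>'a) = 0 + vsmult 0 t" by simp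
    then show "0 \<in> S'" by (rule memI[OF smod_0[OF S]])
    show "x + y \<in> S'" if xy: "x \<in> S'" "y \<in> S'" for x y
    proof -
      obtain s a s' b where h: "s \<in> S" "x = s + vsmult a t" "s' \<in> S" "y = s' + vsmult b t"
        using memE[OF xy(1)] memE[OF xy(2)] by blast
      then have e: "x + y = (s + s') + vsmult (a + b) t" by (simp add: vs_add2 algebra_simps)
      have "s + s' \<in> S" using h S smod_add by blast
      then show ?thesis using e by (rule memI)
    qed
    show "vsmult c x \<in> S'" if xx: "x \<in> S'" for c x
    proof -
      obtain s a where h: "s \<in> S" "x = s + vsmult a t" using memE[OF xx] by blast
      then have e: "vsmult c x = vsmult c s + vsmult (c * a) t" by (simp add: vs_add vs_assoc)
      have "vsmult c s \<in> S" using h S smod_smult by blast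
      then show ?thesis using e by (rule memI)
    qed
  qed
  show SS': "S \<subseteq> S'"
  proof
    fix s assume s: "s \<in> S"
    have "s = s + vsmult 0 t" by simp
    with s show "s \<in> S'" by (rule memI)
  qed
  have "S' \<subseteq> T"
  proof
    fix x assume "x \<in> S'"
    then obtain s a where h: "s \<in> S" "x = s + vsmult a t" using memE by blast
    then show "x \<in> T" using ST T t smod_add smod_smult by blast
  qed
  then show "kspace T S'" unfolding kspace_def using T sm PT SS' by blast
qed

end

context dvr
begin

lemma basisD1: "basis T S d bs \<Longrightarrow> \<forall>i<d. bs i \<in> T"
  unfolding basis_def by blast
lemma basisD2: "basis T S d bs \<Longrightarrow> t \<in> T \<Longrightarrow> \<exists>a. t - lc d a bs \<in> S"
  unfolding basis_def by blast
lemma basisD3: "basis T S d bs \<Longrightarrow> lc d a bs \<in> S \<Longrightarrow> \<forall>i<d. a i \<in> pideal p"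
  unfolding basis_def by blast

lemma basis_exists:
  "kspace T S \<Longrightarrow> finite (cs S ` T) \<Longrightarrow> \<exists>d bs. basis T S d bs \<and> card (cs S ` T) = q ^ d"
proof (induction "card (cs S ` T)" arbitrary: S rule: less_induct)
  case less
  from less.prems(1) have T: "smod T" and S: "smod S" and ST: "S \<subseteq> T" and PT: "pimod p T \<subseteq> S"
    by (auto simp: kspace_def)
  show ?case
  proof (cases "T \<subseteq> S")
    case True
    have "cs S ` T = {cs S 0}"
    proof -
      have h: "cs S x = cs S 0" if "x \<in> T" for x
        using cs_eq[OF smod_sg[OF S], of x 0] True that by auto
      have z: "0 \<in> T" using smod_0[OF T] .
      have "cs S ` T = (\<lambda>_. cs S 0) ` T" by (rule image_cong) (simp_all add: h)
      also have "\<dots> = {cs S 0}" using z by blast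
      finally show ?thesis .
    qed
    moreover have "basis T S 0 (\<lambda>_. 0)" unfolding basis_def using True by auto
    ultimately show ?thesis by (intro exI[of _ 0] exI[of _ "\<lambda>_. 0"]) simp
  next
    case False
    then obtain t where t: "t \<in> T" "t \<notin> S" by blast
    define S' where "S' = {s + vsmult a t | s a. s \<in> S}"
    note cl = card_line[OF less.prems(1) t, folded S'_def]
    have sgS: "sg S" "sg S'" "sg T" using S cl T smod_sg by auto
    have S'T: "S' \<subseteq> T" using cl kspace_def by blast
    note lg = lagrange[OF sgS(1) sgS(2) sgS(3) cl(3) S'T less.prems(2)]
    have cc: "card (cs S ` T) = card (cs S' ` T) * q" using lg(3) cl(1) by simp
    have "cs S 0 \<in> cs S ` T" using smod_0[OF T] by blast
    then have pos: "card (cs S ` T) > 0" using less.prems(2) card_gt_0_iff by blast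
    have lt: "card (cs S' ` T) < card (cs S ` T)"
    proof -
      have "card (cs S' ` T) > 0" using pos cc by (cases "card (cs S' ` T) = 0") auto
      then have "card (cs S' ` T) * 1 < card (cs S' ` T) * q" using q_ge2
        by (intro mult_strict_left_mono) auto
      then show ?thesis using cc by simp
    qed
    from less.hyps[OF lt cl(2) lg(1)] obtain d bs where
      b: "basis T S' d bs" "card (cs S' ` T) = q ^ d" by blast
    define bs' where "bs' = bs(d := t)"
    have lcS: "lc (Suc d) a bs' = lc d a bs + vsmult (a d) t" for a
    proof -
      have "lc d a bs' = lc d a bs" by (rule lc_cong) (auto simp: bs'_def)
      then show ?thesis by (simp add: lc_Suc bs'_def)
    qed
    have "basis T S (Suc d) bs'"
      unfolding basis_def
    proof (intro conjI allI ballI impI)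
      show "bs' i \<in> T" if "i < Suc d" for i
        using basisD1[OF b(1)] t that unfolding bs'_def by (cases "i = d") auto
      show "\<exists>a. t0 - lc (Suc d) a bs' \<in> S" if t0: "t0 \<in> T" for t0
      proof -
        obtain a where "t0 - lc d a bs \<in> S'" using basisD2[OF b(1) t0] by blast
        then obtain s c where sc: "s \<in> S" "t0 - lc d a bs = s + vsmult c t" unfolding S'_def by blast
        have "lc d (a(d := c)) bs = lc d a bs" by (rule lc_cong) auto
        then have "lc (Suc d) (a(d := c)) bs' = lc d a bs + vsmult c t" using lcS[of "a(d := c)"] by simp
        then have "t0 - lc (Suc d) (a(d := c)) bs' = (t0 - lc d a bs) - vsmult c t" by (simp add: algebra_simps)
        also have "\<dots> = s" using sc(2) by simp
        finally have "t0 - lc (Suc d) (a(d := c)) bs' = s" .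
        then show ?thesis using sc(1) by (intro exI[of _ "a(d := c)"]) simp
      qed
      show "a i \<in> pideal p" if h: "lc (Suc d) a bs' \<in> S" "i < Suc d" for a i
      proof -
        have e: "lc d a bs = lc (Suc d) a bs' + vsmult (- a d) t" using lcS[of a] by (simp add: vs_uminus)
        have "lc (Suc d) a bs' + vsmult (- a d) t \<in> S'" unfolding S'_def using h(1) by blast
        then have "lc d a bs \<in> S'" using e by simp
        then have A: "\<forall>i<d. a i \<in> pideal p" by (rule basisD3[OF b(1)])
        have bsT: "\<forall>i<d. bs i \<in> T" by (rule basisD1[OF b(1)])
        have "lc d a bs \<in> pimod p T" by (rule lc_pid[OF T bsT A])
        then have l: "lc d a bs \<in> S" using PT by blast
        have "vsmult (a d) t = lc (Suc d) a bs' - lc d a bs" using lcS[of a] by simp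
        then have "vsmult (a d) t \<in> S" using smod_diff[OF S h(1) l] by simp
        then have "a d \<in> pideal p" using key_inv[OF T S PT t] by blast
        then show ?thesis using A h(2) less_Suc_eq by auto
      qed
    qed
    moreover have "card (cs S ` T) = q ^ Suc d" using cc b(2) by simp
    ultimately show ?thesis by blast
  qed
qed

lemma lc_split:
  "lc (m + e) a (\<lambda>i. if i < m then bs i else ds (i - m)) = lc m a bs + lc e (\<lambda>j. a (m + j)) ds"
proof (induction e)
  case 0
  show ?case by simp (rule lc_cong, auto)
next
  case (Suc e)
  have "lc (m + Suc e) a (\<lambda>i. if i < m then bs i else ds (i - m))
      = lc (m + e) a (\<lambda>i. if i < m then bs i else ds (i - m)) + vsmult (a (m + e)) (ds e)"
    by (simp add: lc_Suc)
  also have "\<dots> = lc m a bs + (lc e (\<lambda>j. a (m + j)) ds + vsmult (a (m + e)) (ds e))"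
    by (simp only: Suc add.assoc)
  also have "\<dots> = lc m a bs + lc (Suc e) (\<lambda>j. a (m + j)) ds"
    by (simp only: lc_Suc)
  finally show ?case .
qed

lemma basis_comb:
  assumes ks: "kspace T S" and T': "smod T'" "S \<subseteq> T'" "T' \<subseteq> T"
    and b1: "basis T T' m bs" and b2: "basis T' S e ds"
  shows "basis T S (m + e) (\<lambda>i. if i < m then bs i else ds (i - m))"
  unfolding basis_def
proof (intro conjI allI ballI impI)
  from ks have T: "smod T" and S: "smod S" and ST: "S \<subseteq> T" and PT: "pimod p T \<subseteq> S"
    unfolding kspace_def by auto
  show "(if i < m then bs i else ds (i - m)) \<in> T" if "i < m + e" for i
  proof (cases "i < m")
    case True
    then show ?thesis using basisD1[OF b1] by simp
  next
    case False
    then have "i - m < e" using that by simp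
    then have "ds (i - m) \<in> T'" using basisD1[OF b2] by blast
    then show ?thesis using False T'(3) by auto
  qed
  show "\<exists>a. t - lc (m + e) a (\<lambda>i. if i < m then bs i else ds (i - m)) \<in> S" if t: "t \<in> T" for t
  proof -
    obtain a where a: "t - lc m a bs \<in> T'" using basisD2[OF b1 t] by blast
    obtain c where c: "(t - lc m a bs) - lc e c ds \<in> S" using basisD2[OF b2 a] by blast
    define a' where "a' i = (if i < m then a i else c (i - m))" for i
    have "lc (m + e) a' (\<lambda>i. if i < m then bs i else ds (i - m)) = lc m a' bs + lc e (\<lambda>j. a' (m + j)) ds"
      by (rule lc_split)
    also have "\<dots> = lc m a bs + lc e c ds"
    proof -
      have "lc m a' bs = lc m a bs" by (rule lc_cong) (auto simp: a'_def)
      moreover have "lc e (\<lambda>j. a' (m + j)) ds = lc e c ds" by (rule lc_cong) (auto simp: a'_def)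
      ultimately show ?thesis by simp
    qed
    finally have "t - lc (m + e) a' (\<lambda>i. if i < m then bs i else ds (i - m)) = (t - lc m a bs) - lc e c ds"
      by (simp add: algebra_simps)
    then have "t - lc (m + e) a' (\<lambda>i. if i < m then bs i else ds (i - m)) \<in> S" using c by (simp only:)
    then show ?thesis by blast
  qed
  show "a i \<in> pideal p" if h: "lc (m + e) a (\<lambda>i. if i < m then bs i else ds (i - m)) \<in> S" "i < m + e" for a i
  proof -
    define u where "u = lc m a bs"
    define w where "w = lc e (\<lambda>j. a (m + j)) ds"
    have uw: "u + w \<in> S" using h(1) lc_split[of m e a bs ds] unfolding u_def w_def by simp
    have dsT: "\<forall>j<e. ds j \<in> T'" by (rule basisD1[OF b2])
    have wT: "w \<in> T'" unfolding w_def by (rule lc_mem[OF T'(1) dsT])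
    have "(u + w) - w \<in> T'" using smod_diff[OF T'(1) _ wT] uw T'(2) by blast
    then have "u \<in> T'" by simp
    then have A: "\<forall>i<m. a i \<in> pideal p" unfolding u_def by (rule basisD3[OF b1])
    have bsT: "\<forall>i<m. bs i \<in> T" by (rule basisD1[OF b1])
    have "u \<in> pimod p T" unfolding u_def by (rule lc_pid[OF T bsT A])
    then have uS: "u \<in> S" using PT by blast
    have "(u + w) - u \<in> S" using smod_diff[OF S uw uS] .
    then have "w \<in> S" by simp
    then have B: "\<forall>j<e. a (m + j) \<in> pideal p" unfolding w_def by (rule basisD3[OF b2])
    show ?thesis
    proof (cases "i < m")
      case True then show ?thesis using A by blast
    next
      case False
      then have "i = m + (i - m)" "i - m < e" using h(2) by auto
      then show ?thesis using B by metis
    qed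
  qed
qed

end


context dvr
begin

definition isoF where
  "isoF S S' d bs bs' C = cs S' (lc d (SOME a. C = cs S (lc d a bs)) bs')"

lemma lc_cs_iff:
  assumes ks: "kspace T S" and b: "basis T S d bs"
  shows "cs S (lc d a bs) = cs S (lc d c bs) \<longleftrightarrow> (\<forall>i<d. a i - c i \<in> pideal p)"
proof -
  from ks have T: "smod T" and S: "smod S" and PT: "pimod p T \<subseteq> S"
    unfolding kspace_def by auto
  have "cs S (lc d a bs) = cs S (lc d c bs) \<longleftrightarrow> lc d a bs - lc d c bs \<in> S"
    by (rule cs_eq[OF smod_sg[OF S]])
  also have "\<dots> \<longleftrightarrow> lc d (\<lambda>i. a i - c i) bs \<in> S" by (simp only: lc_diff)
  also have "\<dots> \<longleftrightarrow> (\<forall>i<d. a i - c i \<in> pideal p)"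
  proof
    assume "lc d (\<lambda>i. a i - c i) bs \<in> S"
    then show "\<forall>i<d. a i - c i \<in> pideal p" using basisD3[OF b] by blast
  next
    assume "\<forall>i<d. a i - c i \<in> pideal p"
    then have "lc d (\<lambda>i. a i - c i) bs \<in> pimod p T" using lc_pid[OF T basisD1[OF b], of "\<lambda>i. a i - c i"] by simp
    then show "lc d (\<lambda>i. a i - c i) bs \<in> S" using PT by blast
  qed
  finally show ?thesis .
qed

lemma span_cs:
  assumes ks: "kspace T S" and b: "basis T S d bs" and t: "t \<in> T"
  shows "\<exists>a. cs S t = cs S (lc d a bs)"
proof -
  from ks have S: "smod S" unfolding kspace_def by auto
  obtain a where "t - lc d a bs \<in> S" using basisD2[OF b t] by blast
  then have "cs S t = cs S (lc d a bs)" using cs_eq[OF smod_sg[OF S]] by blast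
  then show ?thesis by blast
qed

context
  fixes T S T' S' d bs bs'
  assumes ks: "kspace T S" and ks': "kspace T' S'" and b: "basis T S d bs" and b': "basis T' S' d bs'"
begin

lemma F_lc: "isoF S S' d bs bs' (cs S (lc d a bs)) = cs S' (lc d a bs')"
proof -
  define a0 where "a0 = (SOME c. cs S (lc d a bs) = cs S (lc d c bs))"
  have ex: "\<exists>c. cs S (lc d a bs) = cs S (lc d c bs)" by blast
  have h: "cs S (lc d a bs) = cs S (lc d a0 bs)"
    unfolding a0_def by (rule someI_ex[OF ex])
  then have "\<forall>i<d. a i - a0 i \<in> pideal p" using lc_cs_iff[OF ks b] by blast
  then have "cs S' (lc d a bs') = cs S' (lc d a0 bs')" using lc_cs_iff[OF ks' b'] by blast
  moreover have "isoF S S' d bs bs' (cs S (lc d a bs)) = cs S' (lc d a0 bs')"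
    unfolding isoF_def a0_def by (rule refl)
  ultimately show ?thesis by simp
qed

lemma F_rep: "x \<in> T \<Longrightarrow> \<exists>a. cs S x = cs S (lc d a bs) \<and> isoF S S' d bs bs' (cs S x) = cs S' (lc d a bs')"
proof -
  assume x: "x \<in> T"
  obtain a where a: "cs S x = cs S (lc d a bs)" using span_cs[OF ks b x] by blast
  then have "isoF S S' d bs bs' (cs S x) = cs S' (lc d a bs')" using F_lc by simp
  then show ?thesis using a by blast
qed

lemma F_bij: "bij_betw (isoF S S' d bs bs') (cs S ` T) (cs S' ` T')"
  unfolding bij_betw_def
proof
  from ks have T: "smod T" unfolding kspace_def by auto
  from ks' have T': "smod T'" unfolding kspace_def by auto
  show "inj_on (isoF S S' d bs bs') (cs S ` T)"
  proof (rule inj_onI)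
    fix C1 C2 assume C: "C1 \<in> cs S ` T" "C2 \<in> cs S ` T" and e: "isoF S S' d bs bs' C1 = isoF S S' d bs bs' C2"
    obtain t1 t2 where t: "t1 \<in> T" "t2 \<in> T" "C1 = cs S t1" "C2 = cs S t2" using C by blast
    obtain a1 where a1: "cs S t1 = cs S (lc d a1 bs)" using span_cs[OF ks b t(1)] by blast
    obtain a2 where a2: "cs S t2 = cs S (lc d a2 bs)" using span_cs[OF ks b t(2)] by blast
    have "cs S' (lc d a1 bs') = cs S' (lc d a2 bs')" using e t a1 a2 F_lc by simp
    then have "\<forall>i<d. a1 i - a2 i \<in> pideal p" using lc_cs_iff[OF ks' b'] by blast
    then have "cs S (lc d a1 bs) = cs S (lc d a2 bs)" using lc_cs_iff[OF ks b] by blast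
    then show "C1 = C2" using t a1 a2 by simp
  qed
  show "isoF S S' d bs bs' ` cs S ` T = cs S' ` T'"
  proof
    show "isoF S S' d bs bs' ` cs S ` T \<subseteq> cs S' ` T'"
    proof
      fix C assume "C \<in> isoF S S' d bs bs' ` cs S ` T"
      then obtain t where t: "t \<in> T" "C = isoF S S' d bs bs' (cs S t)" by blast
      obtain a where a: "isoF S S' d bs bs' (cs S t) = cs S' (lc d a bs')" using F_rep[OF t(1)] by blast
      have "lc d a bs' \<in> T'" by (rule lc_mem[OF T' basisD1[OF b']])
      then show "C \<in> cs S' ` T'" using t a by simp
    qed
    show "cs S' ` T' \<subseteq> isoF S S' d bs bs' ` cs S ` T"
    proof
      fix C assume "C \<in> cs S' ` T'"
      then obtain t where t: "t \<in> T'" "C = cs S' t" by blast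
      obtain a where a: "cs S' t = cs S' (lc d a bs')" using span_cs[OF ks' b' t(1)] by blast
      have "lc d a bs \<in> T" by (rule lc_mem[OF T basisD1[OF b]])
      then have "cs S (lc d a bs) \<in> cs S ` T" by blast
      moreover have "C = isoF S S' d bs bs' (cs S (lc d a bs))" using t a F_lc by simp
      ultimately show "C \<in> isoF S S' d bs bs' ` cs S ` T" by blast
    qed
  qed
qed

lemma F_add:
  assumes x: "x1 \<in> T" "x2 \<in> T"
    and e1: "isoF S S' d bs bs' (cs S x1) = cs S' y1"
    and e2: "isoF S S' d bs bs' (cs S x2) = cs S' y2"
  shows "isoF S S' d bs bs' (cs S (x1 + x2)) = cs S' (y1 + y2)"
proof -
  from ks have S: "smod S" unfolding kspace_def by auto
  from ks' have S': "smod S'" unfolding kspace_def by auto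
  obtain a1 where a1: "cs S x1 = cs S (lc d a1 bs)" "isoF S S' d bs bs' (cs S x1) = cs S' (lc d a1 bs')"
    using F_rep[OF x(1)] by blast
  obtain a2 where a2: "cs S x2 = cs S (lc d a2 bs)" "isoF S S' d bs bs' (cs S x2) = cs S' (lc d a2 bs')"
    using F_rep[OF x(2)] by blast
  have d1: "x1 - lc d a1 bs \<in> S" using a1(1) cs_eq[OF smod_sg[OF S]] by blast
  have d2: "x2 - lc d a2 bs \<in> S" using a2(1) cs_eq[OF smod_sg[OF S]] by blast
  have "(x1 - lc d a1 bs) + (x2 - lc d a2 bs) \<in> S" using smod_add[OF S d1 d2] .
  moreover have "(x1 - lc d a1 bs) + (x2 - lc d a2 bs) = (x1 + x2) - lc d (\<lambda>i. a1 i + a2 i) bs"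
    unfolding lc_add[symmetric] by (simp add: algebra_simps)
  ultimately have "(x1 + x2) - lc d (\<lambda>i. a1 i + a2 i) bs \<in> S" by simp
  then have "cs S (x1 + x2) = cs S (lc d (\<lambda>i. a1 i + a2 i) bs)" using cs_eq[OF smod_sg[OF S]] by blast
  then have "isoF S S' d bs bs' (cs S (x1 + x2)) = isoF S S' d bs bs' (cs S (lc d (\<lambda>i. a1 i + a2 i) bs))"
    by (rule arg_cong)
  also have "\<dots> = cs S' (lc d (\<lambda>i. a1 i + a2 i) bs')" by (rule F_lc)
  also have "\<dots> = cs S' (lc d a1 bs' + lc d a2 bs')" by (simp only: lc_add)
  finally have F: "isoF S S' d bs bs' (cs S (x1 + x2)) = cs S' (lc d a1 bs' + lc d a2 bs')" .
  have "cs S' y1 = cs S' (lc d a1 bs')" using e1 a1(2) by simp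
  then have f1: "y1 - lc d a1 bs' \<in> S'" using cs_eq[OF smod_sg[OF S'], of y1 "lc d a1 bs'"] by simp
  have "cs S' y2 = cs S' (lc d a2 bs')" using e2 a2(2) by simp
  then have f2: "y2 - lc d a2 bs' \<in> S'" using cs_eq[OF smod_sg[OF S'], of y2 "lc d a2 bs'"] by simp
  have "(y1 - lc d a1 bs') + (y2 - lc d a2 bs') \<in> S'" using smod_add[OF S' f1 f2] .
  moreover have "(y1 - lc d a1 bs') + (y2 - lc d a2 bs') = (y1 + y2) - (lc d a1 bs' + lc d a2 bs')"
    by (simp add: algebra_simps)
  ultimately have "(y1 + y2) - (lc d a1 bs' + lc d a2 bs') \<in> S'" by simp
  then have "cs S' (y1 + y2) = cs S' (lc d a1 bs' + lc d a2 bs')" using cs_eq[OF smod_sg[OF S']] by blast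
  then show ?thesis using F by simp
qed

lemma F_smult:
  assumes x: "x \<in> T" and e: "isoF S S' d bs bs' (cs S x) = cs S' y"
  shows "isoF S S' d bs bs' (cs S (vsmult c x)) = cs S' (vsmult c y)"
proof -
  from ks have S: "smod S" unfolding kspace_def by auto
  from ks' have S': "smod S'" unfolding kspace_def by auto
  obtain a where a: "cs S x = cs S (lc d a bs)" "isoF S S' d bs bs' (cs S x) = cs S' (lc d a bs')"
    using F_rep[OF x] by blast
  have d1: "x - lc d a bs \<in> S" using a(1) cs_eq[OF smod_sg[OF S]] by blast
  have "vsmult c (x - lc d a bs) \<in> S" using smod_smult[OF S d1] .
  moreover have "vsmult c (x - lc d a bs) = vsmult c x - lc d (\<lambda>i. c * a i) bs"
    unfolding lc_smult[symmetric] by (rule vs_diff)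
  ultimately have "vsmult c x - lc d (\<lambda>i. c * a i) bs \<in> S" by simp
  then have "cs S (vsmult c x) = cs S (lc d (\<lambda>i. c * a i) bs)" using cs_eq[OF smod_sg[OF S]] by blast
  then have "isoF S S' d bs bs' (cs S (vsmult c x)) = isoF S S' d bs bs' (cs S (lc d (\<lambda>i. c * a i) bs))"
    by (rule arg_cong)
  also have "\<dots> = cs S' (lc d (\<lambda>i. c * a i) bs')" by (rule F_lc)
  also have "\<dots> = cs S' (vsmult c (lc d a bs'))" by (simp only: lc_smult)
  finally have F: "isoF S S' d bs bs' (cs S (vsmult c x)) = cs S' (vsmult c (lc d a bs'))" .
  have "cs S' y = cs S' (lc d a bs')" using e a(2) by simp
  then have f1: "y - lc d a bs' \<in> S'" using cs_eq[OF smod_sg[OF S'], of y "lc d a bs'"] by simp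
  have "vsmult c (y - lc d a bs') \<in> S'" using smod_smult[OF S' f1] .
  then have "vsmult c y - vsmult c (lc d a bs') \<in> S'" by (simp add: vs_diff)
  then have "cs S' (vsmult c y) = cs S' (vsmult c (lc d a bs'))" using cs_eq[OF smod_sg[OF S']] by blast
  then show ?thesis using F by simp
qed

end

end


lemma vcoset_fun: "vcoset P = cs P"
  by (rule ext) (rule vcoset_eq)

context dvr
begin

lemma vs_cancel: "vsmult p u = vsmult p v \<Longrightarrow> u = v"
  unfolding vsmult_def fun_eq_iff using p0 by simp

lemma smod_Mlat: "smod (Mlat p r c j)"
  unfolding smod_def
proof (intro conjI ballI allI)
  have z: "(0::'a) \<in> pideal p" using sg_pid unfolding sg_def by blast
  show "0 \<in> Mlat p r c j" unfolding Mlat_def vecs_def using z by simp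
  show "x + y \<in> Mlat p r c j" if xy: "x \<in> Mlat p r c j" "y \<in> Mlat p r c j" for x y
    using xy sg_pid unfolding Mlat_def vecs_def sg_def by auto
  show "vsmult a x \<in> Mlat p r c j" if xx: "x \<in> Mlat p r c j" for a x
    using xx pid_mult unfolding Mlat_def vecs_def vsmult_def by auto
qed

lemma Mlat_vecs: "Mlat p r c j \<subseteq> vecs r"
  unfolding Mlat_def by blast

lemma Mlat_mono: "j \<le> n \<Longrightarrow> Mlat p r c n \<subseteq> Mlat p r c j"
  unfolding Mlat_def by auto

lemma pimod_vecs: "X \<subseteq> vecs r \<Longrightarrow> pimod p X \<subseteq> Mlat p r c j"
proof
  fix y assume X: "X \<subseteq> vecs r" and y: "y \<in> pimod p X"
  obtain x where x: "x \<in> X" "y = vsmult p x" using pimodE[OF y] by blast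
  have "\<forall>s\<ge>r. x s = 0" using X x(1) unfolding vecs_def by blast
  then have "y \<in> vecs r" using x(2) unfolding vecs_def vsmult_def by simp
  moreover have "y s \<in> pideal p" for s unfolding pid_iff using x(2) by (auto simp: vsmult_def)
  ultimately show "y \<in> Mlat p r c j" unfolding Mlat_def by blast
qed

lemma fin_quot:
  assumes X: "smod X" "X \<subseteq> vecs r" and fc: "finite (vcoset X ` vecs r)"
  shows "finite (cs (pimod p X) ` vecs r)"
proof -
  have "residue_classes p \<subseteq> cs (pideal p) ` UNIV" using res_cs by simp
  from finite_subset_image[OF finres this] obtain R where
    R: "finite R" "residue_classes p = cs (pideal p) ` R" by blast
  have Rrep: "\<exists>\<rho>\<in>R. a - \<rho> \<in> pideal p" for a
  proof -
    have "cs (pideal p) a \<in> residue_classes p" using res_cs by simp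
    then obtain \<rho> where "\<rho> \<in> R" "cs (pideal p) a = cs (pideal p) \<rho>" using R(2) by blast
    then show ?thesis using cs_eq[OF sg_pid] by blast
  qed
  have "vcoset X ` vecs r \<subseteq> vcoset X ` vecs r" by simp
  from finite_subset_image[OF fc this] obtain Q where
    Q: "Q \<subseteq> vecs r" "finite Q" "vcoset X ` vecs r = vcoset X ` Q" by blast
  have Qrep: "\<exists>q\<in>Q. v - q \<in> X" if v: "v \<in> vecs r" for v
  proof -
    have "vcoset X v \<in> vcoset X ` Q" using Q(3) v by blast
    then obtain q where "q \<in> Q" "cs X v = cs X q" unfolding vcoset_fun by blast
    then show ?thesis using cs_eq[OF smod_sg[OF X(1)]] by blast
  qed
  define Rv where "Rv = {f. \<forall>s. (s \<in> {..<r} \<longrightarrow> f s \<in> R) \<and> (s \<notin> {..<r} \<longrightarrow> f s = (0::'a))}"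
  have finRv: "finite Rv" unfolding Rv_def by (rule finite_set_of_finite_funs) (simp_all add: R(1))
  have sub: "cs (pimod p X) ` vecs r \<subseteq> (\<lambda>(\<rho>, q). cs (pimod p X) (\<rho> + vsmult p q)) ` (Rv \<times> Q)"
  proof
    fix C assume "C \<in> cs (pimod p X) ` vecs r"
    then obtain v where v: "v \<in> vecs r" "C = cs (pimod p X) v" by blast
    define \<rho> where "\<rho> s = (if s < r then (SOME \<rho>. \<rho> \<in> R \<and> v s - \<rho> \<in> pideal p) else 0)" for s
    have \<rho>1: "\<rho> s \<in> R \<and> v s - \<rho> s \<in> pideal p" if "s < r" for s
    proof -
      have ex: "\<exists>\<rho>. \<rho> \<in> R \<and> v s - \<rho> \<in> pideal p" using Rrep by blast
      have "(SOME \<rho>. \<rho> \<in> R \<and> v s - \<rho> \<in> pideal p) \<in> R \<and> v s - (SOME \<rho>. \<rho> \<in> R \<and> v s - \<rho> \<in> pideal p) \<in> pideal p"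
        by (rule someI_ex[OF ex])
      then show ?thesis unfolding \<rho>_def using that by simp
    qed
    define u where "u s = (if s < r then (SOME u. v s - \<rho> s = p * u) else 0)" for s
    have u1: "v s - \<rho> s = p * u s" if "s < r" for s
    proof -
      have ex: "\<exists>u. v s - \<rho> s = p * u" using \<rho>1[OF that] pid_iff by blast
      have "v s - \<rho> s = p * (SOME u. v s - \<rho> s = p * u)" by (rule someI_ex[OF ex])
      then show ?thesis unfolding u_def using that by simp
    qed
    have vr: "\<forall>s\<ge>r. v s = 0" using v(1) unfolding vecs_def by blast
    have veq: "v = \<rho> + vsmult p u"
    proof (rule ext)
      fix s
      show "v s = (\<rho> + vsmult p u) s"
      proof (cases "s < r")
        case True
        then show ?thesis using u1[OF True] by (simp add: vsmult_def algebra_simps)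
      next
        case False
        then show ?thesis using vr by (simp add: vsmult_def \<rho>_def u_def)
      qed
    qed
    have uv: "u \<in> vecs r" unfolding vecs_def u_def by simp
    obtain q where q: "q \<in> Q" "u - q \<in> X" using Qrep[OF uv] by blast
    have \<rho>R: "\<rho> \<in> Rv" unfolding Rv_def using \<rho>1 by (simp add: \<rho>_def)
    have "v - (\<rho> + vsmult p q) = vsmult p (u - q)" using veq by (simp add: vs_diff)
    moreover have "vsmult p (u - q) \<in> pimod p X" using q(2) by (rule pimodI)
    ultimately have "v - (\<rho> + vsmult p q) \<in> pimod p X" by simp
    then have "cs (pimod p X) v = cs (pimod p X) (\<rho> + vsmult p q)"
      using cs_eq[OF smod_sg[OF pimod_smod[OF X(1)]]] by blast
    then have "C = (\<lambda>(\<rho>, q). cs (pimod p X) (\<rho> + vsmult p q)) (\<rho>, q)" using v(2) by simp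
    moreover have "(\<rho>, q) \<in> Rv \<times> Q" using \<rho>R q(1) by blast
    ultimately show "C \<in> (\<lambda>(\<rho>, q). cs (pimod p X) (\<rho> + vsmult p q)) ` (Rv \<times> Q)" by (rule image_eqI)
  qed
  show ?thesis by (rule finite_subset[OF sub]) (intro finite_imageI finite_cartesian_product finRv Q(2))
qed

end


lemma dvr_from_nc:
  fixes p :: "'a::ring_1_no_zero_divisors"
  assumes dvr: "nc_dvr p" and fin_res: "finite (residue_classes p)"
  shows "dvr p"
proof
  show "p \<noteq> 0" using dvr unfolding nc_dvr_def by blast
  show "\<exists>a'. a * p = p * a'" for a
  proof -
    have "a * p \<in> range (\<lambda>x. x * p)" by blast
    then have "a * p \<in> range (\<lambda>x. p * x)" using dvr unfolding nc_dvr_def by simp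
    then show ?thesis by blast
  qed
  show "1 \<notin> pideal p" using dvr unfolding nc_dvr_def quotient_division_ring_def by blast
  show "\<exists>y. y * x - 1 \<in> pideal p" if "x \<notin> pideal p" for x
    using dvr that unfolding nc_dvr_def quotient_division_ring_def by blast
  show "finite (residue_classes p)" by (rule fin_res)
qed

theorem propositionB2:
  fixes p :: "'a::ring_1_no_zero_divisors"
    and n r :: nat and c :: "nat \<Rightarrow> nat"
    and X1 :: "(nat \<Rightarrow> 'a) set"
  assumes dvr: "nc_dvr p"
    and fin_res: "finite (residue_classes p)"
    and n: "n \<ge> 1" and r: "r \<ge> 1"
    and c_range: "\<forall>s<r. 1 \<le> c s \<and> c s \<le> n"
    and c_mono: "\<forall>s t. s \<le> t \<longrightarrow> t < r \<longrightarrow> c s \<le> c t"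
    and X1_sub: "left_submodule r X1"
    and X1_M1: "X1 \<subseteq> Mlat p r c 1"
    and X1_fin: "finite_colength r X1"
  shows "filtered_iso p r c n X1
           {vadd x (vsmult p m) | x m. x \<in> X1 \<and> m \<in> Mlat p r c 1}"
proof -
  interpret dvr p by (rule dvr_from_nc[OF dvr fin_res])
  define X where "X = X1"
  define Y where "Y = {vadd x (vsmult p m) | x m. x \<in> X1 \<and> m \<in> Mlat p r c 1}"
  define M1 where "M1 = Mlat p r c 1"
  define Mn where "Mn = Mlat p r c n"
  define PX where "PX = pimod p X"
  define PY where "PY = pimod p Y"
  have Xs: "smod X" using X1_sub unfolding X_def left_submodule_def smod_def vadd_eq zero_fun_def
    by blast
  have Xv: "X \<subseteq> vecs r" using X1_sub unfolding X_def left_submodule_def by blast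
  have XM1: "X \<subseteq> M1" using X1_M1 unfolding X_def M1_def .
  have M1s: "smod M1" unfolding M1_def by (rule smod_Mlat)
  have Mns: "smod Mn" unfolding Mn_def by (rule smod_Mlat)
  have M1v: "M1 \<subseteq> vecs r" unfolding M1_def by (rule Mlat_vecs)
  have Ymem: "y \<in> Y \<longleftrightarrow> (\<exists>x m. x \<in> X \<and> m \<in> M1 \<and> y = x + vsmult p m)" for y
    unfolding Y_def X_def M1_def vadd_eq by blast
  have YI: "x \<in> X \<Longrightarrow> m \<in> M1 \<Longrightarrow> y = x + vsmult p m \<Longrightarrow> y \<in> Y" for x m y
    using Ymem by blast
  have Ys: "smod Y" unfolding smod_def
  proof (intro conjI ballI allI)
    show "0 \<in> Y" by (rule YI[OF smod_0[OF Xs] smod_0[OF M1s]]) simp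
    show "x + y \<in> Y" if xy: "x \<in> Y" "y \<in> Y" for x y
    proof -
      obtain x1 m1 where h1: "x1 \<in> X" "m1 \<in> M1" "x = x1 + vsmult p m1" using xy(1) Ymem by blast
      obtain x2 m2 where h2: "x2 \<in> X" "m2 \<in> M1" "y = x2 + vsmult p m2" using xy(2) Ymem by blast
      have e: "x + y = (x1 + x2) + vsmult p (m1 + m2)" using h1(3) h2(3) by (simp add: vs_add algebra_simps)
      show ?thesis by (rule YI[OF smod_add[OF Xs h1(1) h2(1)] smod_add[OF M1s h1(2) h2(2)] e])
    qed
    show "vsmult a x \<in> Y" if xx: "x \<in> Y" for a x
    proof -
      obtain x1 m1 where h1: "x1 \<in> X" "m1 \<in> M1" "x = x1 + vsmult p m1" using xx Ymem by blast
      obtain a' where a': "vsmult a (vsmult p m1) = vsmult p (vsmult a' m1)" using vs_p_comm by blast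
      have e: "vsmult a x = vsmult a x1 + vsmult p (vsmult a' m1)" using h1(3) a' by (simp add: vs_add)
      show ?thesis by (rule YI[OF smod_smult[OF Xs h1(1)] smod_smult[OF M1s h1(2)] e])
    qed
  qed
  have XY: "X \<subseteq> Y"
  proof
    fix x assume "x \<in> X"
    then show "x \<in> Y" by (rule YI[OF _ smod_0[OF M1s]]) simp
  qed
  have PM1Y: "vsmult p m \<in> Y" if "m \<in> M1" for m
    by (rule YI[OF smod_0[OF Xs] that]) simp
  have PM1n: "vsmult p m \<in> Mn" if "m \<in> M1" for m
    using pimod_vecs[OF M1v, of c n] pimodI[OF that] unfolding Mn_def M1_def by blast
  have YM1: "Y \<subseteq> M1"
  proof
    fix y assume "y \<in> Y"
    then obtain x m where h: "x \<in> X" "m \<in> M1" "y = x + vsmult p m" using Ymem by blast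
    have "x + vsmult p m \<in> M1" using smod_add[OF M1s] XM1 h(1) smod_smult[OF M1s h(2)] by blast
    then show "y \<in> M1" using h(3) by simp
  qed
  have Yv: "Y \<subseteq> vecs r" using YM1 M1v by blast
  have PXs: "smod PX" unfolding PX_def by (rule pimod_smod[OF Xs])
  have PYs: "smod PY" unfolding PY_def by (rule pimod_smod[OF Ys])
  have PXX: "PX \<subseteq> X" unfolding PX_def by (rule pimod_sub[OF Xs])
  have PYY: "PY \<subseteq> Y" unfolding PY_def by (rule pimod_sub[OF Ys])
  have PXY: "PX \<subseteq> PY" unfolding PX_def PY_def by (rule pimod_mono[OF XY])
  have PXn: "PX \<subseteq> Mn" unfolding PX_def Mn_def by (rule pimod_vecs[OF Xv])
  have PYn: "PY \<subseteq> Mn" unfolding PY_def Mn_def by (rule pimod_vecs[OF Yv])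
  have XMs: "smod (X \<inter> Mn)" by (rule smod_Int[OF Xs Mns])
  have YMs: "smod (Y \<inter> Mn)" by (rule smod_Int[OF Ys Mns])
  have ksX: "kspace X PX" unfolding kspace_def using Xs PXs PXX PX_def by blast
  have ksY: "kspace Y PY" unfolding kspace_def using Ys PYs PYY PY_def by blast
  have ksXn: "kspace (X \<inter> Mn) PX" unfolding kspace_def
    using XMs PXs PXX PXn pimod_mono[of "X \<inter> Mn" X] PX_def by blast
  have ksYn: "kspace (Y \<inter> Mn) PY" unfolding kspace_def
    using YMs PYs PYY PYn pimod_mono[of "Y \<inter> Mn" Y] PY_def by blast
  have ksXX: "kspace X (X \<inter> Mn)" unfolding kspace_def
    using Xs XMs PXX PXn PX_def by blast
  have ksYY: "kspace Y (Y \<inter> Mn)" unfolding kspace_def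
    using Ys YMs PYY PYn PY_def by blast
  have sgPX: "sg PX" and sgPY: "sg PY" and sgX: "sg X" and sgY: "sg Y"
    and sgXn: "sg (X \<inter> Mn)" and sgYn: "sg (Y \<inter> Mn)"
    using PXs PYs Xs Ys XMs YMs smod_sg by blast+
  have fin0: "finite (cs PX ` vecs r)"
    unfolding PX_def by (rule fin_quot[OF Xs Xv]) (use X1_fin in \<open>simp add: X_def finite_colength_def\<close>)
  have finY: "finite (cs PX ` Y)" using finite_subset[OF image_mono[OF Yv] fin0] .
  note L1 = lagrange[OF sgPX sgX sgY PXX XY finY]
  note L2 = lagrange[OF sgPX sgPY sgY PXY PYY finY]
  have cPYPX: "card (cs PX ` PY) = card (cs X ` Y)"
  proof -
    have img: "cs PX ` PY = (\<lambda>y. cs PX (vsmult p y)) ` Y" unfolding PY_def pimod_def by (simp add: image_image)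
    have ker: "\<forall>a\<in>Y. \<forall>b\<in>Y. cs PX (vsmult p a) = cs PX (vsmult p b) \<longleftrightarrow> cs X a = cs X b"
    proof (intro ballI)
      fix a b assume ab: "a \<in> Y" "b \<in> Y"
      have "cs PX (vsmult p a) = cs PX (vsmult p b) \<longleftrightarrow> vsmult p (a - b) \<in> PX"
        using cs_eq[OF sgPX] by (simp add: vs_diff)
      also have "\<dots> \<longleftrightarrow> a - b \<in> X"
      proof
        assume "vsmult p (a - b) \<in> PX"
        then obtain x where x: "x \<in> X" "vsmult p (a - b) = vsmult p x" using pimodE unfolding PX_def by blast
        have "a - b = x" by (rule vs_cancel[OF x(2)])
        then show "a - b \<in> X" using x(1) by simp
      next
        assume "a - b \<in> X"
        then show "vsmult p (a - b) \<in> PX" unfolding PX_def by (rule pimodI)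
      qed
      also have "\<dots> \<longleftrightarrow> cs X a = cs X b" using cs_eq[OF sgX] by simp
      finally show "cs PX (vsmult p a) = cs PX (vsmult p b) \<longleftrightarrow> cs X a = cs X b" .
    qed
    show ?thesis unfolding img by (rule card_ker(1)[OF ker])
  qed
  have "cs X 0 \<in> cs X ` Y" using smod_0[OF Ys] by blast
  then have posYX: "card (cs X ` Y) > 0" using L1(1) card_gt_0_iff by blast
  have cXY: "card (cs PX ` X) = card (cs PY ` Y)"
  proof -
    have "card (cs X ` Y) * card (cs PX ` X) = card (cs PY ` Y) * card (cs PX ` PY)"
      using L1(3)[symmetric] L2(3) by (rule trans)
    then have "card (cs X ` Y) * card (cs PX ` X) = card (cs X ` Y) * card (cs PY ` Y)"
      unfolding cPYPX by (simp only: mult.commute)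
    then show ?thesis using posYX by simp
  qed
  note L3 = lagrange[OF sgPX sgXn sgX _ _ L1(2)]
  have L3': "finite (cs (X \<inter> Mn) ` X)" "finite (cs PX ` (X \<inter> Mn))"
    "card (cs PX ` X) = card (cs (X \<inter> Mn) ` X) * card (cs PX ` (X \<inter> Mn))"
    using L3 PXX PXn by blast+
  note L4 = lagrange[OF sgPY sgYn sgY _ _ L2(1)]
  have L4': "finite (cs (Y \<inter> Mn) ` Y)" "finite (cs PY ` (Y \<inter> Mn))"
    "card (cs PY ` Y) = card (cs (Y \<inter> Mn) ` Y) * card (cs PY ` (Y \<inter> Mn))"
    using L4 PYY PYn by blast+
  have YX_img: "cs (Y \<inter> Mn) ` Y = cs (Y \<inter> Mn) ` X"
  proof
    show "cs (Y \<inter> Mn) ` X \<subseteq> cs (Y \<inter> Mn) ` Y" using XY by blast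
    show "cs (Y \<inter> Mn) ` Y \<subseteq> cs (Y \<inter> Mn) ` X"
    proof
      fix C assume "C \<in> cs (Y \<inter> Mn) ` Y"
      then obtain y where y: "y \<in> Y" "C = cs (Y \<inter> Mn) y" by blast
      then obtain x m where h: "x \<in> X" "m \<in> M1" "y = x + vsmult p m" using Ymem by blast
      have "y - x \<in> Y \<inter> Mn" using h PM1Y PM1n by simp
      then have "cs (Y \<inter> Mn) y = cs (Y \<inter> Mn) x" using cs_eq[OF sgYn] by blast
      then show "C \<in> cs (Y \<inter> Mn) ` X" using y h(1) by simp
    qed
  qed
  have cXYn: "card (cs (X \<inter> Mn) ` X) = card (cs (Y \<inter> Mn) ` Y)"
  proof -
    have "\<forall>a\<in>X. \<forall>b\<in>X. cs (X \<inter> Mn) a = cs (X \<inter> Mn) b \<longleftrightarrow> cs (Y \<inter> Mn) a = cs (Y \<inter> Mn) b"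
    proof (intro ballI)
      fix a b assume ab: "a \<in> X" "b \<in> X"
      have d: "a - b \<in> X" using smod_diff[OF Xs ab] .
      then have "a - b \<in> Y" using XY by blast
      have "cs (X \<inter> Mn) a = cs (X \<inter> Mn) b \<longleftrightarrow> a - b \<in> X \<inter> Mn" by (rule cs_eq[OF sgXn])
      also have "\<dots> \<longleftrightarrow> a - b \<in> Y \<inter> Mn" using d \<open>a - b \<in> Y\<close> by blast
      also have "\<dots> \<longleftrightarrow> cs (Y \<inter> Mn) a = cs (Y \<inter> Mn) b" by (rule cs_eq[OF sgYn, symmetric])
      finally show "cs (X \<inter> Mn) a = cs (X \<inter> Mn) b \<longleftrightarrow> cs (Y \<inter> Mn) a = cs (Y \<inter> Mn) b" .
    qed
    from card_ker(1)[OF this] show ?thesis using YX_img by simp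
  qed
  have "cs (X \<inter> Mn) 0 \<in> cs (X \<inter> Mn) ` X" using smod_0[OF Xs] by blast
  then have posXn: "card (cs (X \<inter> Mn) ` X) > 0" using L3'(1) card_gt_0_iff by blast
  have cKL: "card (cs PX ` (X \<inter> Mn)) = card (cs PY ` (Y \<inter> Mn))"
    using L3'(3) L4'(3) cXY cXYn posXn by simp
  obtain e ds where bds: "basis (X \<inter> Mn) PX e ds" "card (cs PX ` (X \<inter> Mn)) = q ^ e"
    using basis_exists[OF ksXn L3'(2)] by blast
  obtain e' ds' where bds': "basis (Y \<inter> Mn) PY e' ds'" "card (cs PY ` (Y \<inter> Mn)) = q ^ e'"
    using basis_exists[OF ksYn L4'(2)] by blast
  have "q ^ e = q ^ e'" using bds(2) bds'(2) cKL by simp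
  then have ee: "e' = e" using q_ge2 by simp
  obtain m bs where bbs: "basis X (X \<inter> Mn) m bs"
    using basis_exists[OF ksXX L3'(1)] by blast
  have bbsY: "basis Y (Y \<inter> Mn) m bs"
    unfolding basis_def
  proof (intro conjI allI ballI impI)
    show "bs i \<in> Y" if "i < m" for i using basisD1[OF bbs] that XY by blast
    show "\<exists>a. y - lc m a bs \<in> Y \<inter> Mn" if y: "y \<in> Y" for y
    proof -
      obtain x mm where h: "x \<in> X" "mm \<in> M1" "y = x + vsmult p mm" using y Ymem by blast
      obtain a where a: "x - lc m a bs \<in> X \<inter> Mn" using basisD2[OF bbs h(1)] by blast
      have "(x - lc m a bs) + vsmult p mm \<in> Y \<inter> Mn"
        using smod_add[OF YMs] a XY PM1Y[OF h(2)] PM1n[OF h(2)] by blast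
      moreover have "(x - lc m a bs) + vsmult p mm = y - lc m a bs" using h(3) by (simp add: algebra_simps)
      ultimately show ?thesis by (intro exI[of _ a]) simp
    qed
    show "a i \<in> pideal p" if h: "lc m a bs \<in> Y \<inter> Mn" "i < m" for a i
    proof -
      have "lc m a bs \<in> X" by (rule lc_mem[OF Xs basisD1[OF bbs]])
      then have "lc m a bs \<in> X \<inter> Mn" using h(1) by blast
      then show ?thesis using basisD3[OF bbs] h(2) by blast
    qed
  qed
  define bX where "bX i = (if i < m then bs i else ds (i - m))" for i
  define bY where "bY i = (if i < m then bs i else ds' (i - m))" for i
  have bX: "basis X PX (m + e) bX" unfolding bX_def
    by (rule basis_comb[OF ksX XMs _ _ bbs bds(1)]) (use PXX PXn in blast)+
  have bY: "basis Y PY (m + e) bY" unfolding bY_def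
    by (rule basis_comb[OF ksY YMs _ _ bbsY bds'(1)[unfolded ee]]) (use PYY PYn in blast)+
  define F where "F = isoF PX PY (m + e) bX bY"
  note Fb = F_bij[OF ksX ksY bX bY, folded F_def]
  note Fa = F_add[OF ksX ksY bX bY, folded F_def]
  note Fs = F_smult[OF ksX ksY bX bY, folded F_def]
  note Fr = F_rep[OF ksX ksY bX bY, folded F_def]
  have key: "\<exists>y\<in>Y. F (cs PX x) = cs PY y \<and> y - x \<in> Mn" if x: "x \<in> X" for x
  proof -
    obtain a where a: "cs PX x = cs PX (lc (m + e) a bX)" "F (cs PX x) = cs PY (lc (m + e) a bY)"
      using Fr[OF x] by blast
    have yY: "lc (m + e) a bY \<in> Y" by (rule lc_mem[OF Ys basisD1[OF bY]])
    have d1: "lc (m + e) a bX - x \<in> PX" using a(1) cs_eq[OF sgPX, of "lc (m + e) a bX" x] by simp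
    have diffn: "\<forall>i<m + e. bY i - bX i \<in> Mn"
    proof (intro allI impI)
      fix i assume i: "i < m + e"
      show "bY i - bX i \<in> Mn"
      proof (cases "i < m")
        case True
        then show ?thesis using smod_0[OF Mns] by (simp add: bX_def bY_def)
      next
        case False
        then have "i - m < e" using i by simp
        then have "ds' (i - m) \<in> Mn" "ds (i - m) \<in> Mn"
          using basisD1[OF bds(1)] basisD1[OF bds'(1)[unfolded ee]] by blast+
        then show ?thesis using False smod_diff[OF Mns] by (simp add: bX_def bY_def)
      qed
    qed
    have d2: "lc (m + e) a bY - lc (m + e) a bX \<in> Mn"
      unfolding lc_diffb by (rule lc_mem[OF Mns diffn])
    have "(lc (m + e) a bY - lc (m + e) a bX) + (lc (m + e) a bX - x) \<in> Mn"
      using smod_add[OF Mns d2] d1 PXn by blast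
    then have "lc (m + e) a bY - x \<in> Mn" by simp
    then show ?thesis using yY a(2) by blast
  qed
  have MqX: "Mquot p r c X1 j = cs PX ` (X \<inter> Mlat p r c j)" for j
    unfolding Mquot_def vcoset_fun PX_def X_def ..
  have MqY: "Mquot p r c Y j = cs PY ` (Y \<inter> Mlat p r c j)" for j
    unfolding Mquot_def vcoset_fun PY_def ..
  have XM1': "X \<inter> Mlat p r c 1 = X" using XM1 unfolding M1_def by blast
  have YM1': "Y \<inter> Mlat p r c 1 = Y" using YM1 unfolding M1_def by blast
  have filt: "F ` Mquot p r c X1 j = Mquot p r c Y j" if j: "j \<in> {1..n}" for j
  proof -
    have MnMj: "Mn \<subseteq> Mlat p r c j" unfolding Mn_def using j Mlat_mono by simp
    have Mjs: "smod (Mlat p r c j)" by (rule smod_Mlat)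
    show ?thesis unfolding MqX MqY
    proof
      show "F ` cs PX ` (X \<inter> Mlat p r c j) \<subseteq> cs PY ` (Y \<inter> Mlat p r c j)"
      proof
        fix C assume "C \<in> F ` cs PX ` (X \<inter> Mlat p r c j)"
        then obtain x where x: "x \<in> X" "x \<in> Mlat p r c j" "C = F (cs PX x)" by blast
        obtain y where y: "y \<in> Y" "F (cs PX x) = cs PY y" "y - x \<in> Mn" using key[OF x(1)] by blast
        have "(y - x) + x \<in> Mlat p r c j" using smod_add[OF Mjs] y(3) MnMj x(2) by blast
        then have "y \<in> Mlat p r c j" by simp
        then show "C \<in> cs PY ` (Y \<inter> Mlat p r c j)" using x(3) y(1,2) by blast
      qed
      show "cs PY ` (Y \<inter> Mlat p r c j) \<subseteq> F ` cs PX ` (X \<inter> Mlat p r c j)"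
      proof
        fix C assume "C \<in> cs PY ` (Y \<inter> Mlat p r c j)"
        then obtain y where y: "y \<in> Y" "y \<in> Mlat p r c j" "C = cs PY y" by blast
        have "C \<in> F ` cs PX ` X" using Fb y(1,3) unfolding bij_betw_def by blast
        then obtain x where x: "x \<in> X" "C = F (cs PX x)" by blast
        obtain y0 where y0: "y0 \<in> Y" "F (cs PX x) = cs PY y0" "y0 - x \<in> Mn" using key[OF x(1)] by blast
        have "cs PY y0 = cs PY y" using x(2) y0(2) y(3) by simp
        then have "y0 - y \<in> PY" using cs_eq[OF sgPY] by blast
        then have "y0 - y \<in> Mn" using PYn by blast
        then have "(y0 - y) - (y0 - x) \<in> Mn" using smod_diff[OF Mns] y0(3) by blast
        then have "x - y \<in> Mlat p r c j" using MnMj by (simp add: algebra_simps) blast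
        then have "(x - y) + y \<in> Mlat p r c j" using smod_add[OF Mjs] y(2) by blast
        then have "x \<in> Mlat p r c j" by simp
        then show "C \<in> F ` cs PX ` (X \<inter> Mlat p r c j)" using x by blast
      qed
    qed
  qed
  have "filtered_iso p r c n X1 Y"
    unfolding filtered_iso_def
  proof (intro exI[of _ F] conjI)
    show "bij_betw F (Mquot p r c X1 1) (Mquot p r c Y 1)"
      unfolding MqX MqY XM1' YM1' by (rule Fb)
    show "\<forall>x1\<in>X1. \<forall>x2\<in>X1. \<forall>y1\<in>Y. \<forall>y2\<in>Y.
            F (vcoset (pimod p X1) x1) = vcoset (pimod p Y) y1 \<longrightarrow>
            F (vcoset (pimod p X1) x2) = vcoset (pimod p Y) y2 \<longrightarrow>
            F (vcoset (pimod p X1) (vadd x1 x2)) = vcoset (pimod p Y) (vadd y1 y2)"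
      unfolding vcoset_fun vadd_eq PX_def[symmetric] PY_def[symmetric] X_def[symmetric]
      using Fa by blast
    show "\<forall>a. \<forall>x\<in>X1. \<forall>y\<in>Y.
            F (vcoset (pimod p X1) x) = vcoset (pimod p Y) y \<longrightarrow>
            F (vcoset (pimod p X1) (vsmult a x)) = vcoset (pimod p Y) (vsmult a y)"
      unfolding vcoset_fun PX_def[symmetric] PY_def[symmetric] X_def[symmetric]
      using Fs by blast
    show "\<forall>j\<in>{1..n}. F ` Mquot p r c X1 j = Mquot p r c Y j" using filt by blast
  qed
  then show ?thesis unfolding Y_def .
qed

end
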